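(* Let $A,B,C$ be the observed variables of the Triangle scenario, each taking values in $\{-1,+1\}$. For every distribution $P_{ABC}$ compatible with the Triangle scenario (latent variables of arbitrary cardinality), $$\langle AC\rangle+\langle BC\rangle\le 1+\langle A\rangle\langle B\rangle,$$ where $\langle\cdot\rangle$ denotes expectation under $P_{ABC}$.
   Context: The Triangle scenario is the causal structure with observed nodes $A,B,C$, latent nodes $X,Y,Z$ and edges $X\to A$, $X\to B$, $Y\to A$, $Y\to C$, $Z\to B$, $Z\to C$ (each pair of observed variables shares exactly one latent parent, and observed variables have no other parents). A distribution $P_{ABC}$ is compatible with it if there exist distributions $P_X,P_Y,P_Z$ and conditionals $P_{A|XY},P_{B|XZ},P_{C|YZ}$ such that $P_{ABC}$ is the marginal of $P_XP_YP_ZP_{A|XY}P_{B|XZ}P_{C|YZ}$. *)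

theory Defs
  imports "HOL-Probability.Probability"
begin

definition pm1 :: "int set" where
  "pm1 = {-1, 1}"

definition binary_conditional ::
  "'u measure \<Rightarrow> 'v measure \<Rightarrow> ('u \<Rightarrow> 'v \<Rightarrow> int \<Rightarrow> real) \<Rightarrow> bool" where
  "binary_conditional M1 M2 q \<longleftrightarrow>
     (\<forall>a\<in>pm1. (\<lambda>(u,v). q u v a) \<in> borel_measurable (M1 \<Otimes>\<^sub>M M2)) \<and>
     (\<forall>u\<in>space M1. \<forall>v\<in>space M2. (\<forall>a\<in>pm1. 0 \<le> q u v a) \<and> (\<Sum>a\<in>pm1. q u v a) = 1)"

text \<open>The observed distribution P_ABC generated by the Triangle network with latent
  sources X ~ MX, Y ~ MY, Z ~ MZ (independent) and conditionals
  P_{A|XY} = qA, P_{B|XZ} = qB, P_{C|YZ} = qC.\<close>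
definition triangle_distribution ::
  "'x measure \<Rightarrow> 'y measure \<Rightarrow> 'z measure \<Rightarrow>
   ('x \<Rightarrow> 'y \<Rightarrow> int \<Rightarrow> real) \<Rightarrow> ('x \<Rightarrow> 'z \<Rightarrow> int \<Rightarrow> real) \<Rightarrow>
   ('y \<Rightarrow> 'z \<Rightarrow> int \<Rightarrow> real) \<Rightarrow> int \<Rightarrow> int \<Rightarrow> int \<Rightarrow> real" where
  "triangle_distribution MX MY MZ qA qB qC a b c =
     (\<integral>w. qA (fst w) (fst (snd w)) a * qB (fst w) (snd (snd w)) b * qC (fst (snd w)) (snd (snd w)) c
        \<partial>(MX \<Otimes>\<^sub>M (MY \<Otimes>\<^sub>M MZ)))"

definition expect3 :: "(int \<Rightarrow> int \<Rightarrow> int \<Rightarrow> real) \<Rightarrow> (int \<Rightarrow> int \<Rightarrow> int \<Rightarrow> real) \<Rightarrow> real" where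
  "expect3 P f = (\<Sum>a\<in>pm1. \<Sum>b\<in>pm1. \<Sum>c\<in>pm1. f a b c * P a b c)"

end

theory Submission imports Defs begin

lemma sum_pm1: "(\<Sum>a\<in>pm1. f a) = f (-1) + (f 1 :: real)"
  by (simp add: pm1_def)

lemma alg_bound:
  fixes u v c :: real
  assumes "\<bar>u\<bar> \<le> 1" "\<bar>v\<bar> \<le> 1" "\<bar>c\<bar> \<le> 1"
  shows "(u + v) * c \<le> 1 + u * v"
proof (cases "u + v \<ge> 0")
  case True
  have "(u+v)*c \<le> (u+v)*1" using assms(3) True by (intro mult_left_mono) auto
  moreover have "0 \<le> (1-u)*(1-v)" using assms by auto
  ultimately show ?thesis by (simp add: algebra_simps)
next
  case False
  have "(u+v)*c \<le> (u+v)*(-1)" using assms(3) False by (intro mult_left_mono_neg) auto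
  moreover have "0 \<le> (1+u)*(1+v)" using assms by auto
  ultimately show ?thesis by (simp add: algebra_simps)
qed

lemma expand3:
  fixes qa qb qc :: "int \<Rightarrow> real"
  assumes "qb (-1) + qb 1 = 1" "qa (-1) + qa 1 = 1" "qc (-1) + qc 1 = 1"
  shows "(\<Sum>a\<in>pm1. \<Sum>b\<in>pm1. \<Sum>c\<in>pm1. real_of_int (a*c) * (qa a * qb b * qc c))
           = (qa 1 - qa (-1)) * (qc 1 - qc (-1))"
    and "(\<Sum>a\<in>pm1. \<Sum>b\<in>pm1. \<Sum>c\<in>pm1. real_of_int (b*c) * (qa a * qb b * qc c))
           = (qb 1 - qb (-1)) * (qc 1 - qc (-1))"
    and "(\<Sum>a\<in>pm1. \<Sum>b\<in>pm1. \<Sum>c\<in>pm1. real_of_int a * (qa a * qb b * qc c))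
           = (qa 1 - qa (-1))"
    and "(\<Sum>a\<in>pm1. \<Sum>b\<in>pm1. \<Sum>c\<in>pm1. real_of_int b * (qa a * qb b * qc c))
           = (qb 1 - qb (-1))"
proof -
  have b: "qb (-1) = 1 - qb 1" and a: "qa (-1) = 1 - qa 1" and c: "qc (-1) = 1 - qc 1"
    using assms by auto
  show "(\<Sum>a\<in>pm1. \<Sum>b\<in>pm1. \<Sum>c\<in>pm1. real_of_int (a*c) * (qa a * qb b * qc c))
           = (qa 1 - qa (-1)) * (qc 1 - qc (-1))"
    unfolding sum_pm1 a b c by (simp add: algebra_simps)
  show "(\<Sum>a\<in>pm1. \<Sum>b\<in>pm1. \<Sum>c\<in>pm1. real_of_int (b*c) * (qa a * qb b * qc c))
           = (qb 1 - qb (-1)) * (qc 1 - qc (-1))"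
    unfolding sum_pm1 a b c by (simp add: algebra_simps)
  show "(\<Sum>a\<in>pm1. \<Sum>b\<in>pm1. \<Sum>c\<in>pm1. real_of_int a * (qa a * qb b * qc c))
           = (qa 1 - qa (-1))"
    unfolding sum_pm1 a b c by (simp add: algebra_simps)
  show "(\<Sum>a\<in>pm1. \<Sum>b\<in>pm1. \<Sum>c\<in>pm1. real_of_int b * (qa a * qb b * qc c))
           = (qb 1 - qb (-1))"
    unfolding sum_pm1 a b c by (simp add: algebra_simps)
qed


theorem mainTheorem7:
  fixes MX :: "'x measure" and MY :: "'y measure" and MZ :: "'z measure"
    and qA :: "'x \<Rightarrow> 'y \<Rightarrow> int \<Rightarrow> real"
    and qB :: "'x \<Rightarrow> 'z \<Rightarrow> int \<Rightarrow> real"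
    and qC :: "'y \<Rightarrow> 'z \<Rightarrow> int \<Rightarrow> real"
    and P :: "int \<Rightarrow> int \<Rightarrow> int \<Rightarrow> real"
  assumes "prob_space MX" and "prob_space MY" and "prob_space MZ"
    and "binary_conditional MX MY qA"
    and "binary_conditional MX MZ qB"
    and "binary_conditional MY MZ qC"
    and "P = triangle_distribution MX MY MZ qA qB qC"
  shows "expect3 P (\<lambda>a b c. real_of_int (a * c)) + expect3 P (\<lambda>a b c. real_of_int (b * c))
           \<le> 1 + expect3 P (\<lambda>a b c. real_of_int a) * expect3 P (\<lambda>a b c. real_of_int b)"
proof -
  interpret X: prob_space MX by fact
  interpret Y: prob_space MY by fact
  interpret Z: prob_space MZ by fact
  interpret YZ: pair_prob_space MY MZ ..
  define N where "N = MY \<Otimes>\<^sub>M MZ"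
  define T where "T = MX \<Otimes>\<^sub>M N"
  interpret N: prob_space N unfolding N_def by (rule YZ.prob_space_axioms)
  interpret XN: pair_prob_space MX N ..
  have pm: "-1 \<in> pm1" "1 \<in> pm1" by (auto simp: pm1_def)
  note bA = assms(4)[unfolded binary_conditional_def]
  note bB = assms(5)[unfolded binary_conditional_def]
  note bC = assms(6)[unfolded binary_conditional_def]
  have [measurable]: "(\<lambda>(u,v). qA u v 1) \<in> borel_measurable (MX \<Otimes>\<^sub>M MY)"
    "(\<lambda>(u,v). qA u v (-1)) \<in> borel_measurable (MX \<Otimes>\<^sub>M MY)"
    "(\<lambda>(u,v). qB u v 1) \<in> borel_measurable (MX \<Otimes>\<^sub>M MZ)"
    "(\<lambda>(u,v). qB u v (-1)) \<in> borel_measurable (MX \<Otimes>\<^sub>M MZ)"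
    "(\<lambda>(u,v). qC u v 1) \<in> borel_measurable (MY \<Otimes>\<^sub>M MZ)"
    "(\<lambda>(u,v). qC u v (-1)) \<in> borel_measurable (MY \<Otimes>\<^sub>M MZ)"
    using bA bB bC pm by auto
  have sA: "\<And>u v. u \<in> space MX \<Longrightarrow> v \<in> space MY \<Longrightarrow> 0 \<le> qA u v 1 \<and> 0 \<le> qA u v (-1) \<and> qA u v (-1) + qA u v 1 = 1"
    using bA pm by (auto simp: sum_pm1)
  have sB: "\<And>u v. u \<in> space MX \<Longrightarrow> v \<in> space MZ \<Longrightarrow> 0 \<le> qB u v 1 \<and> 0 \<le> qB u v (-1) \<and> qB u v (-1) + qB u v 1 = 1"
    using bB pm by (auto simp: sum_pm1)
  have sC: "\<And>u v. u \<in> space MY \<Longrightarrow> v \<in> space MZ \<Longrightarrow> 0 \<le> qC u v 1 \<and> 0 \<le> qC u v (-1) \<and> qC u v (-1) + qC u v 1 = 1"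
    using bC pm by (auto simp: sum_pm1)
  have spT: "space T = space MX \<times> (space MY \<times> space MZ)"
    by (simp add: T_def N_def space_pair_measure)

  have intg: "integrable T (\<lambda>w. qA (fst w) (fst (snd w)) a * qB (fst w) (snd (snd w)) b * qC (fst (snd w)) (snd (snd w)) c)"
    if "a \<in> pm1" "b \<in> pm1" "c \<in> pm1" for a b c
  proof (rule XN.integrable_const_bound[where B=1, folded T_def])
    have q1: "0 \<le> qA u v a \<and> qA u v a \<le> 1" if "a \<in> pm1" "u \<in> space MX" "v \<in> space MY" for u v a
      using sA[OF that(2,3)] that(1) by (auto simp: pm1_def)
    have q2: "0 \<le> qB u v a \<and> qB u v a \<le> 1" if "a \<in> pm1" "u \<in> space MX" "v \<in> space MZ" for u v a
      using sB[OF that(2,3)] that(1) by (auto simp: pm1_def)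
    have q3: "0 \<le> qC u v a \<and> qC u v a \<le> 1" if "a \<in> pm1" "u \<in> space MY" "v \<in> space MZ" for u v a
      using sC[OF that(2,3)] that(1) by (auto simp: pm1_def)
    show "AE w in T. norm (qA (fst w) (fst (snd w)) a * qB (fst w) (snd (snd w)) b * qC (fst (snd w)) (snd (snd w)) c) \<le> 1"
    proof (rule AE_I2)
      fix w assume "w \<in> space T"
      then have w: "fst w \<in> space MX" "fst (snd w) \<in> space MY" "snd (snd w) \<in> space MZ"
        by (auto simp: spT)
      from q1[OF that(1) w(1,2)] q2[OF that(2) w(1,3)] q3[OF that(3) w(2,3)]
      show "norm (qA (fst w) (fst (snd w)) a * qB (fst w) (snd (snd w)) b * qC (fst (snd w)) (snd (snd w)) c) \<le> 1"
        by (simp add: abs_mult mult_le_one)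
    qed
    have "a = -1 \<or> a = 1" "b = -1 \<or> b = 1" "c = -1 \<or> c = 1" using that by (auto simp: pm1_def)
    then show "(\<lambda>w. qA (fst w) (fst (snd w)) a * qB (fst w) (snd (snd w)) b * qC (fst (snd w)) (snd (snd w)) c) \<in> borel_measurable T"
      unfolding T_def N_def by (elim disjE; simp; measurable)
  qed

  define al where "al = (\<lambda>u v. qA u v 1 - qA u v (-1))"
  define be where "be = (\<lambda>u v. qB u v 1 - qB u v (-1))"
  define ga where "ga = (\<lambda>u v. qC u v 1 - qC u v (-1))"
  have mal[measurable]: "(\<lambda>(u,v). al u v) \<in> borel_measurable (MX \<Otimes>\<^sub>M MY)"
    unfolding al_def by measurable
  have mbe[measurable]: "(\<lambda>(u,v). be u v) \<in> borel_measurable (MX \<Otimes>\<^sub>M MZ)"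
    unfolding be_def by measurable
  have mga[measurable]: "(\<lambda>(u,v). ga u v) \<in> borel_measurable (MY \<Otimes>\<^sub>M MZ)"
    unfolding ga_def by measurable
  have bal: "\<bar>al u v\<bar> \<le> 1" if "u \<in> space MX" "v \<in> space MY" for u v
    using sA[OF that] unfolding al_def by auto
  have bbe: "\<bar>be u v\<bar> \<le> 1" if "u \<in> space MX" "v \<in> space MZ" for u v
    using sB[OF that] unfolding be_def by auto
  have bga: "\<bar>ga u v\<bar> \<le> 1" if "u \<in> space MY" "v \<in> space MZ" for u v
    using sC[OF that] unfolding ga_def by auto

  have E: "expect3 P f = (\<integral>w. (\<Sum>a\<in>pm1. \<Sum>b\<in>pm1. \<Sum>c\<in>pm1. f a b c *
      (qA (fst w) (fst (snd w)) a * qB (fst w) (snd (snd w)) b * qC (fst (snd w)) (snd (snd w)) c)) \<partial>T)" for f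
    unfolding expect3_def assms(7) triangle_distribution_def T_def[symmetric] N_def[symmetric]
    by (simp add: integral_sum integrable_sum intg)
  have sums: "qB (fst w) (snd (snd w)) (-1) + qB (fst w) (snd (snd w)) 1 = 1"
      "qA (fst w) (fst (snd w)) (-1) + qA (fst w) (fst (snd w)) 1 = 1"
      "qC (fst (snd w)) (snd (snd w)) (-1) + qC (fst (snd w)) (snd (snd w)) 1 = 1"
    if "w \<in> space T" for w
    using that sA[of "fst w" "fst (snd w)"] sB[of "fst w" "snd (snd w)"] sC[of "fst (snd w)" "snd (snd w)"]
    by (auto simp: spT)
  have EAC: "expect3 P (\<lambda>a b c. real_of_int (a * c)) = (\<integral>w. al (fst w) (fst (snd w)) * ga (fst (snd w)) (snd (snd w)) \<partial>T)"
    unfolding E apply (intro Bochner_Integration.integral_cong refl)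
    subgoal premises p for w using expand3(1)[OF sums[OF p]] by (simp add: al_def ga_def)
    done
  have EBC: "expect3 P (\<lambda>a b c. real_of_int (b * c)) = (\<integral>w. be (fst w) (snd (snd w)) * ga (fst (snd w)) (snd (snd w)) \<partial>T)"
    unfolding E apply (intro Bochner_Integration.integral_cong refl)
    subgoal premises p for w using expand3(2)[OF sums[OF p]] by (simp add: be_def ga_def)
    done
  have EA: "expect3 P (\<lambda>a b c. real_of_int a) = (\<integral>w. al (fst w) (fst (snd w)) \<partial>T)"
    unfolding E apply (intro Bochner_Integration.integral_cong refl)
    subgoal premises p for w using expand3(3)[OF sums[OF p]] by (simp add: al_def)
    done
  have EB: "expect3 P (\<lambda>a b c. real_of_int b) = (\<integral>w. be (fst w) (snd (snd w)) \<partial>T)"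
    unfolding E apply (intro Bochner_Integration.integral_cong refl)
    subgoal premises p for w using expand3(4)[OF sums[OF p]] by (simp add: be_def)
    done
  define abar where "abar = (\<lambda>y. \<integral>x. al x y \<partial>MX)"
  define bbar where "bbar = (\<lambda>z. \<integral>x. be x z \<partial>MX)"
  have mabar[measurable]: "abar \<in> borel_measurable MY" unfolding abar_def by measurable
  have mbbar[measurable]: "bbar \<in> borel_measurable MZ" unfolding bbar_def by measurable
  have ial: "integrable MX (\<lambda>x. al x y)" if y: "y \<in> space MY" for y
  proof (rule X.integrable_const_bound[where B=1])
    show "(\<lambda>x. al x y) \<in> borel_measurable MX" using measurable_Pair1[OF mal y] by simp
    show "AE x in MX. norm (al x y) \<le> 1" by (rule AE_I2) (simp add: bal y)
  qed
  have ibe: "integrable MX (\<lambda>x. be x z)" if z: "z \<in> space MZ" for z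
  proof (rule X.integrable_const_bound[where B=1])
    show "(\<lambda>x. be x z) \<in> borel_measurable MX" using measurable_Pair1[OF mbe z] by simp
    show "AE x in MX. norm (be x z) \<le> 1" by (rule AE_I2) (simp add: bbe z)
  qed
  have babar: "\<bar>abar y\<bar> \<le> 1" if y: "y \<in> space MY" for y
  proof -
    have "abar y \<le> 1" unfolding abar_def
      using bal[OF _ y] by (intro X.integral_le_const[OF ial[OF y]] AE_I2) (force simp: abs_le_iff)
    moreover have "-1 \<le> abar y" unfolding abar_def
      using bal[OF _ y] by (intro X.integral_ge_const[OF ial[OF y]] AE_I2) (force simp: abs_le_iff)
    ultimately show ?thesis by auto
  qed
  have bbbar: "\<bar>bbar z\<bar> \<le> 1" if z: "z \<in> space MZ" for z
  proof -
    have "bbar z \<le> 1" unfolding bbar_def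
      using bbe[OF _ z] by (intro X.integral_le_const[OF ibe[OF z]] AE_I2) (force simp: abs_le_iff)
    moreover have "-1 \<le> bbar z" unfolding bbar_def
      using bbe[OF _ z] by (intro X.integral_ge_const[OF ibe[OF z]] AE_I2) (force simp: abs_le_iff)
    ultimately show ?thesis by auto
  qed
  have spN: "space N = space MY \<times> space MZ" by (simp add: N_def space_pair_measure)

  have iT1: "integrable T (\<lambda>w. al (fst w) (fst (snd w)) * ga (fst (snd w)) (snd (snd w)))"
  proof (rule XN.integrable_const_bound[where B=1, folded T_def])
    show "AE w in T. norm (al (fst w) (fst (snd w)) * ga (fst (snd w)) (snd (snd w))) \<le> 1"
      by (rule AE_I2) (auto simp: spT abs_mult intro!: mult_le_one bal bga)
  qed (simp add: T_def N_def)
  have iT2: "integrable T (\<lambda>w. be (fst w) (snd (snd w)) * ga (fst (snd w)) (snd (snd w)))"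
  proof (rule XN.integrable_const_bound[where B=1, folded T_def])
    show "AE w in T. norm (be (fst w) (snd (snd w)) * ga (fst (snd w)) (snd (snd w))) \<le> 1"
      by (rule AE_I2) (auto simp: spT abs_mult intro!: mult_le_one bbe bga)
  qed (simp add: T_def N_def)
  have iT3: "integrable T (\<lambda>w. al (fst w) (fst (snd w)))"
  proof (rule XN.integrable_const_bound[where B=1, folded T_def])
    show "AE w in T. norm (al (fst w) (fst (snd w))) \<le> 1"
      by (rule AE_I2) (auto simp: spT intro!: bal)
  qed (simp add: T_def N_def)
  have iT4: "integrable T (\<lambda>w. be (fst w) (snd (snd w)))"
  proof (rule XN.integrable_const_bound[where B=1, folded T_def])
    show "AE w in T. norm (be (fst w) (snd (snd w))) \<le> 1"
      by (rule AE_I2) (auto simp: spT intro!: bbe)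
  qed (simp add: T_def N_def)
  have fubT: "integral\<^sup>L T (\<lambda>w. F (fst w) (snd w)) = (\<integral>n. (\<integral>x. F x n \<partial>MX) \<partial>N)"
    if "integrable T (\<lambda>w. F (fst w) (snd w))" for F :: "'x \<Rightarrow> 'y \<times> 'z \<Rightarrow> real"
  proof -
    have cp: "case_prod F = (\<lambda>w. F (fst w) (snd w))" by (simp add: fun_eq_iff split_beta)
    show ?thesis using XN.integral_snd[of F] that unfolding cp T_def by simp
  qed
  have fubN: "integral\<^sup>L N (\<lambda>n. F (fst n) (snd n)) = (\<integral>y. (\<integral>z. F y z \<partial>MZ) \<partial>MY)"
    if "integrable N (\<lambda>n. F (fst n) (snd n))" for F :: "'y \<Rightarrow> 'z \<Rightarrow> real"
  proof -
    have cp: "case_prod F = (\<lambda>w. F (fst w) (snd w))" by (simp add: fun_eq_iff split_beta)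
    show ?thesis using YZ.integral_fst[of F] that unfolding cp N_def by simp
  qed
  have iNbound: "integrable N g" if "g \<in> borel_measurable N" "\<And>n. n \<in> space N \<Longrightarrow> \<bar>g n\<bar> \<le> B" for g :: "_ \<Rightarrow> real" and B :: real
    using that by (intro N.integrable_const_bound[where B=B] AE_I2) auto

  define H where "H = (\<lambda>x n. (al x (fst n) + be x (snd n)) * ga (fst n) (snd n))"
  have iH: "integrable T (\<lambda>w. H (fst w) (snd w))"
    using Bochner_Integration.integrable_add[OF iT1 iT2] by (simp add: H_def distrib_right)
  have L1: "expect3 P (\<lambda>a b c. real_of_int (a * c)) + expect3 P (\<lambda>a b c. real_of_int (b * c))
      = (\<integral>n. (abar (fst n) + bbar (snd n)) * ga (fst n) (snd n) \<partial>N)"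
  proof -
    have "expect3 P (\<lambda>a b c. real_of_int (a * c)) + expect3 P (\<lambda>a b c. real_of_int (b * c))
        = integral\<^sup>L T (\<lambda>w. H (fst w) (snd w))"
      unfolding EAC EBC Bochner_Integration.integral_add[OF iT1 iT2, symmetric]
      by (simp add: H_def distrib_right)
    also have "\<dots> = (\<integral>n. (\<integral>x. H x n \<partial>MX) \<partial>N)" by (rule fubT[OF iH])
    also have "\<dots> = (\<integral>n. (abar (fst n) + bbar (snd n)) * ga (fst n) (snd n) \<partial>N)"
    proof (intro Bochner_Integration.integral_cong refl)
      fix n assume "n \<in> space N"
      then have n: "fst n \<in> space MY" "snd n \<in> space MZ" by (auto simp: spN)
      show "(\<integral>x. H x n \<partial>MX) = (abar (fst n) + bbar (snd n)) * ga (fst n) (snd n)"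
        unfolding H_def abar_def bbar_def
        by (simp add: Bochner_Integration.integral_add[OF ial[OF n(1)] ibe[OF n(2)]])
    qed
    finally show ?thesis .
  qed
  have L2: "(\<integral>n. (abar (fst n) + bbar (snd n)) * ga (fst n) (snd n) \<partial>N)
      \<le> (\<integral>n. 1 + abar (fst n) * bbar (snd n) \<partial>N)"
  proof (rule Bochner_Integration.integral_mono)
    show "integrable N (\<lambda>n. (abar (fst n) + bbar (snd n)) * ga (fst n) (snd n))"
    proof (rule iNbound[of _ 2])
      show "(\<lambda>n. (abar (fst n) + bbar (snd n)) * ga (fst n) (snd n)) \<in> borel_measurable N"
        unfolding N_def by measurable
      fix n assume "n \<in> space N"
      then have n: "fst n \<in> space MY" "snd n \<in> space MZ" by (auto simp: spN)
      have h1: "\<bar>abar (fst n) + bbar (snd n)\<bar> \<le> 2" using babar[OF n(1)] bbbar[OF n(2)] by linarith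
      show "\<bar>(abar (fst n) + bbar (snd n)) * ga (fst n) (snd n)\<bar> \<le> 2"
        using mult_mono[OF h1 bga[OF n]] by (simp add: abs_mult)
    qed
    show "integrable N (\<lambda>n. 1 + abar (fst n) * bbar (snd n))"
      by (rule iNbound[of _ 2]) (auto simp: N_def space_pair_measure abs_mult intro!: 
           order.trans[OF abs_triangle_ineq] add_mono[where c=1 and d=1, simplified] babar bbbar
           mult_le_one)
    fix n assume "n \<in> space N"
    then have n: "fst n \<in> space MY" "snd n \<in> space MZ" by (auto simp: spN)
    show "(abar (fst n) + bbar (snd n)) * ga (fst n) (snd n) \<le> 1 + abar (fst n) * bbar (snd n)"
      by (rule alg_bound[OF babar[OF n(1)] bbbar[OF n(2)] bga[OF n]])
  qed
  have iprod: "integrable N (\<lambda>n. abar (fst n) * bbar (snd n))"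
    by (rule iNbound[of _ 1]) (auto simp: N_def space_pair_measure abs_mult intro!: mult_le_one babar bbbar)
  have L3: "(\<integral>n. 1 + abar (fst n) * bbar (snd n) \<partial>N) = 1 + (\<integral>y. abar y \<partial>MY) * (\<integral>z. bbar z \<partial>MZ)"
  proof -
    have "(\<integral>n. 1 + abar (fst n) * bbar (snd n) \<partial>N) = 1 + (\<integral>n. abar (fst n) * bbar (snd n) \<partial>N)"
      using Bochner_Integration.integral_add[OF N.integrable_const[of 1] iprod] by (simp add: N.prob_space)
    also have "(\<integral>n. abar (fst n) * bbar (snd n) \<partial>N) = (\<integral>y. (\<integral>z. abar y * bbar z \<partial>MZ) \<partial>MY)"
      by (rule fubN[of "\<lambda>y z. abar y * bbar z", OF iprod])
    also have "\<dots> = (\<integral>y. abar y \<partial>MY) * (\<integral>z. bbar z \<partial>MZ)" by simp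
    finally show ?thesis .
  qed
  have R1: "expect3 P (\<lambda>a b c. real_of_int a) = (\<integral>y. abar y \<partial>MY)"
  proof -
    have "expect3 P (\<lambda>a b c. real_of_int a) = (\<integral>n. (\<integral>x. al x (fst n) \<partial>MX) \<partial>N)"
      unfolding EA by (rule fubT[of "\<lambda>x n. al x (fst n)", OF iT3])
    also have "\<dots> = (\<integral>n. abar (fst n) \<partial>N)" by (simp add: abar_def)
    also have "\<dots> = (\<integral>y. (\<integral>z. abar y \<partial>MZ) \<partial>MY)"
      by (rule fubN[of "\<lambda>y z. abar y"], rule iNbound[of _ 1]) (auto simp: N_def space_pair_measure babar)
    also have "\<dots> = (\<integral>y. abar y \<partial>MY)" by (simp add: Z.prob_space)
    finally show ?thesis .
  qed
  have R2: "expect3 P (\<lambda>a b c. real_of_int b) = (\<integral>z. bbar z \<partial>MZ)"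
  proof -
    have "expect3 P (\<lambda>a b c. real_of_int b) = (\<integral>n. (\<integral>x. be x (snd n) \<partial>MX) \<partial>N)"
      unfolding EB by (rule fubT[of "\<lambda>x n. be x (snd n)", OF iT4])
    also have "\<dots> = (\<integral>n. bbar (snd n) \<partial>N)" by (simp add: bbar_def)
    also have "\<dots> = (\<integral>y. (\<integral>z. bbar z \<partial>MZ) \<partial>MY)"
      by (rule fubN[of "\<lambda>y z. bbar z"], rule iNbound[of _ 1]) (auto simp: N_def space_pair_measure bbbar)
    also have "\<dots> = (\<integral>z. bbar z \<partial>MZ)" by (simp add: Y.prob_space)
    finally show ?thesis .
  qed
  show ?thesis unfolding R1 R2 L1 using L2 L3 by simp
qed
end
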